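(* Let $q\ge 1$ and $n\ge 0$. The map $\phi$ defined below restricts to a bijection from $\mathcal{B}_n(1^{q+1})$ onto $\mathcal{W}^q_n$. Here, for $w\in\mathcal{B}_n(1^{q+1})$, $\phi(w)$ is defined recursively by $$\phi(w)=\begin{cases}1^k & \text{if } w=1^k,\ k\in[0,q],\\ \psi(\phi(v)) & \text{if } w=1^q0v,\\ \phi(v)\,01^k & \text{if } w=1^k0v,\ k\in[0,q-1],\end{cases}$$ and $\psi$ is the map from $\mathcal{B}_m$ to $\mathcal{B}_{m+q+1}$ given by $\psi(v01^k)=v001^{k+q}$ for any binary word $v$ and $k\ge 0$, and $\psi(1^m)=1^{m+q+1}$.
   Context: $\mathcal{B}_n$ is the set of binary words (over $\{0,1\}$) of length $n$; $\mathcal{B}_n(1^{q+1})$ is the set of words in $\mathcal{B}_n$ having no factor (block of consecutive letters) equal to $1^{q+1}$. For $q\ge1$, a binary word is $q$-decreasing if for every maximal run of $0$s, of length $a>0$, together with the (possibly empty) maximal run of $1$s immediately following it, of length $b\ge 0$, one has $q\cdot a>b$. $\mathcal{W}^q_n$ denotes the set of $q$-decreasing words of length $n$. Exponents denote repetition, e.g. $1^k$ is $k$ consecutive $1$s. *)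

theory Defs
  imports Main "HOL-Library.Sublist"
begin

text \<open>Binary words are represented as bool lists: True = letter 1, False = letter 0.\<close>

definition binwords :: "nat \<Rightarrow> bool list set" where
  "binwords n = {w. length w = n}"

definition avoid_words :: "nat \<Rightarrow> nat \<Rightarrow> bool list set" where
  "avoid_words q n = {w \<in> binwords n. \<not> sublist (replicate (Suc q) True) w}"

text \<open>q-decreasing: for every maximal run 0^a (a>0) followed by the maximal
  (possibly empty) run 1^b, q*a > b.\<close>
definition q_decreasing :: "nat \<Rightarrow> bool list \<Rightarrow> bool" where
  "q_decreasing q w \<longleftrightarrow>
     (\<forall>u a b v. w = u @ replicate a False @ replicate b True @ v \<and> 0 < a
        \<and> (u = [] \<or> last u = True)
        \<and> (b = 0 \<longrightarrow> v = [])
        \<and> (v = [] \<or> hd v = False)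
        \<longrightarrow> b < q * a)"

definition W_words :: "nat \<Rightarrow> nat \<Rightarrow> bool list set" where
  "W_words q n = {w \<in> binwords n. q_decreasing q w}"

definition psi :: "nat \<Rightarrow> bool list \<Rightarrow> bool list" where
  "psi q u = (if \<forall>x\<in>set u. x then replicate (length u + q + 1) True
              else (let k = length (takeWhile id (rev u));
                        v = take (length u - k - 1) u
                    in v @ [False, False] @ replicate (k + q) True))"

text \<open>phi, defined recursively; on words outside B_n(1^(q+1)) its value is irrelevant.\<close>
function phi :: "nat \<Rightarrow> bool list \<Rightarrow> bool list" where
  "phi q w = (let k = length (takeWhile id w) in
     if k = length w then w
     else (let v = drop (Suc k) w in
           if k = q then psi q (phi q v)
           else phi q v @ False # replicate k True))"
  by auto
termination
  apply (relation "measure (\<lambda>(q, w). length w)")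
   apply auto
   apply (case_tac w; simp)+
  done

end

theory Submission
  imports Defs
begin

declare phi.simps[simp del]

abbreviation R :: "nat \<Rightarrow> bool list" where "R q \<equiv> replicate (Suc q) True"

lemma word_cases: "(\<exists>k. w = replicate k True) \<or> (\<exists>k v. w = replicate k True @ False # v)"
proof (induction w)
  case Nil then show ?case by (metis replicate_0)
next
  case (Cons x w)
  show ?case
  proof (cases x)
    case True
    from Cons.IH show ?thesis
    proof
      assume "\<exists>k. w = replicate k True" then obtain k where "w = replicate k True" by blast
      then have "x # w = replicate (Suc k) True" using True by simp
      then show ?thesis by blast
    next
      assume "\<exists>k v. w = replicate k True @ False # v" then obtain k v where "w = replicate k True @ False # v" by blast
      then have "x # w = replicate (Suc k) True @ False # v" using True by simp
      then show ?thesis by blast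
    qed
  next
    case False
    then have "x # w = replicate 0 True @ False # w" by simp
    then show ?thesis by blast
  qed
qed

lemma word_cases_rev: "(\<exists>k. w = replicate k True) \<or> (\<exists>y k. w = y @ False # replicate k True)"
proof -
  from word_cases[of "rev w"] show ?thesis
  proof
    assume "\<exists>k. rev w = replicate k True"
    then obtain k where "rev w = replicate k True" by blast
    then have "w = replicate k True" by (metis rev_replicate rev_rev_ident)
    then show ?thesis by blast
  next
    assume "\<exists>k v. rev w = replicate k True @ False # v"
    then obtain k v where "rev w = replicate k True @ False # v" by blast
    then have "w = rev v @ False # replicate k True" by (metis rev_rev_ident rev_append rev_replicate rev.simps append_assoc append_Cons append_Nil)
    then show ?thesis by blast
  qed
qed

lemma tw_rep[simp]: "takeWhile id (replicate k True @ False # v) = replicate k True"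
  by (induction k) auto

lemma rep_neq[simp]: "replicate m True \<noteq> y @ False # z" "y @ False # z \<noteq> replicate m True"
proof -
  have "False \<in> set (y @ False # z)" by simp
  moreover have "False \<notin> set (replicate m True)" by simp
  ultimately show "replicate m True \<noteq> y @ False # z" "y @ False # z \<noteq> replicate m True" by metis+
qed

lemma rep_neq2[simp]: "True # replicate m True \<noteq> y @ False # z" "y @ False # z \<noteq> True # replicate m True"
  using rep_neq[where m="Suc m"] by auto

lemma snoc_eq:
  assumes "y @ False # replicate k True = y' @ False # replicate k' True"
  shows "y = y' \<and> k = k'"
proof -
  have "takeWhile id (rev (y @ False # replicate k True)) = replicate k True" by simp
  moreover have "takeWhile id (rev (y' @ False # replicate k' True)) = replicate k' True" by simp
  ultimately have "k = k'" using assms by (metis length_replicate)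
  then show ?thesis using assms by simp
qed

lemma phi_ones: "phi q (replicate k True) = replicate k True"
  by (subst phi.simps) simp

lemma phi_step: "phi q (replicate k True @ False # v) =
   (if k = q then psi q (phi q v) else phi q v @ False # replicate k True)"
  by (subst phi.simps) (simp add: Let_def)

lemma psi_ones: "psi q (replicate m True) = replicate (m + q + 1) True"
  by (simp add: psi_def)

lemma psi_step: "psi q (y @ False # replicate k True) = y @ [False, False] @ replicate (k + q) True"
  by (simp add: psi_def Let_def)

lemma length_psi: "length (psi q u) = length u + q + 1"
  using word_cases_rev[of u] by (auto simp: psi_ones psi_step)

lemma length_phi: "length (phi q w) = length w"
proof (induction "length w" arbitrary: w rule: less_induct)
  case less
  from word_cases[of w] show ?case
  proof
    assume "\<exists>k. w = replicate k True" then show ?thesis by (auto simp: phi_ones)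
  next
    assume "\<exists>k v. w = replicate k True @ False # v"
    then obtain k v where w: "w = replicate k True @ False # v" by blast
    have "length (phi q v) = length v" using less w by simp
    then show ?thesis using w by (simp add: phi_step length_psi)
  qed
qed

lemma psi_inj: assumes "psi q u1 = psi q u2" shows "u1 = u2"
proof -
  consider (a) m1 m2 where "u1 = replicate m1 True" "u2 = replicate m2 True"
    | (b) m1 y2 k2 where "u1 = replicate m1 True" "u2 = y2 @ False # replicate k2 True"
    | (c) m2 y1 k1 where "u2 = replicate m2 True" "u1 = y1 @ False # replicate k1 True"
    | (d) y1 k1 y2 k2 where "u1 = y1 @ False # replicate k1 True" "u2 = y2 @ False # replicate k2 True"
    using word_cases_rev[of u1] word_cases_rev[of u2] by blast
  then show ?thesis
  proof cases
    case a then show ?thesis using assms by (simp add: psi_ones)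
  next
    case b then show ?thesis using assms by (simp add: psi_ones psi_step)
  next
    case c then show ?thesis using assms by (simp add: psi_ones psi_step)
  next
    case d
    then have "(y1 @ [False]) @ False # replicate (k1 + q) True = (y2 @ [False]) @ False # replicate (k2 + q) True"
      using assms by (simp add: psi_step)
    from snoc_eq[OF this] show ?thesis using d by simp
  qed
qed


lemma QD_alt:
  assumes "1 \<le> q"
  shows "q_decreasing q w \<longleftrightarrow> (\<forall>u a b v. w = u @ replicate a False @ replicate b True @ v \<and> 0 < a
        \<and> (u = [] \<or> last u) \<and> (v = [] \<or> \<not> hd v) \<longrightarrow> b < q * a)"
proof
  assume H: "q_decreasing q w"
  show "\<forall>u a b v. w = u @ replicate a False @ replicate b True @ v \<and> 0 < a
        \<and> (u = [] \<or> last u) \<and> (v = [] \<or> \<not> hd v) \<longrightarrow> b < q * a"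
  proof (intro allI impI)
    fix u a b v assume h: "w = u @ replicate a False @ replicate b True @ v \<and> 0 < a
        \<and> (u = [] \<or> last u) \<and> (v = [] \<or> \<not> hd v)"
    show "b < q * a"
    proof (cases "b = 0")
      case True then show ?thesis using h assms by simp
    next
      case False then show ?thesis using H h unfolding q_decreasing_def by auto
    qed
  qed
next
  assume H: "\<forall>u a b v. w = u @ replicate a False @ replicate b True @ v \<and> 0 < a
        \<and> (u = [] \<or> last u) \<and> (v = [] \<or> \<not> hd v) \<longrightarrow> b < q * a"
  then show "q_decreasing q w" unfolding q_decreasing_def by auto
qed

lemma QD_ones: "q_decreasing q (replicate m True)"
  unfolding q_decreasing_def
proof (intro allI impI)
  fix u a b v assume h: "replicate m True = u @ replicate a False @ replicate b True @ v \<and> 0 < a \<and>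
       (u = [] \<or> last u = True) \<and> (b = 0 \<longrightarrow> v = []) \<and> (v = [] \<or> hd v = False)"
  then have "False \<in> set (replicate m True)" by (metis Un_iff in_set_replicate set_append gr0_conv_Suc replicate_Suc list.set_intros(1))
  then show "b < q * a" by simp
qed

lemma trail_ones:
  assumes "0 < a"
  shows "length (takeWhile id (rev (p @ replicate a False @ replicate b True))) = b"
proof -
  obtain a' where "a = Suc a'" using assms gr0_conv_Suc by blast
  then have "rev (p @ replicate a False @ replicate b True) = replicate b True @ False # (replicate a' False @ rev p)"
    by (simp del: replicate_append_same add: replicate_append_same[symmetric])
  then show ?thesis by (simp only: tw_rep length_replicate)
qed

lemma tw_not_rep[simp]: "takeWhile Not (replicate k False @ v) = replicate k False @ takeWhile Not v"
  by (induction k) auto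

lemma trail_zeros:
  assumes "u = [] \<or> last u"
  shows "length (takeWhile Not (rev (u @ replicate a False))) = a"
proof (cases "u = []")
  case True then show ?thesis by simp
next
  case False
  then obtain u' where "u = u' @ [True]" using assms by (metis append_butlast_last_id)
  then show ?thesis by simp
qed

lemma sorted_FT: "sorted (replicate a False @ replicate b True)"
  by (auto simp: sorted_append)

lemma not_sorted_split:
  assumes "us @ v = replicate a False @ replicate b True" "us \<noteq> []" "last us" "v \<noteq> []" "\<not> hd v"
  shows False
proof -
  have "sorted (us @ v)" using assms(1) sorted_FT by simp
  moreover have "True \<in> set us" using assms(2,3) last_in_set by fastforce
  moreover have "False \<in> set v" using assms(4,5) by (metis hd_in_set)
  ultimately show False by (auto simp: sorted_append)
qed

lemma QD_block:
  assumes q: "1 \<le> q" and a: "0 < a" and y: "y = [] \<or> last y"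
  shows "q_decreasing q (y @ replicate a False @ replicate b True) \<longleftrightarrow> q_decreasing q y \<and> b < q * a"
proof
  assume H: "q_decreasing q (y @ replicate a False @ replicate b True)"
  have "b < q * a" using H[unfolded QD_alt[OF q]] a y
    by (metis append_Nil2)
  moreover have "q_decreasing q y"
    unfolding QD_alt[OF q]
  proof (intro allI impI)
    fix u a' b' v assume h: "y = u @ replicate a' False @ replicate b' True @ v \<and> 0 < a' \<and>
          (u = [] \<or> last u) \<and> (v = [] \<or> \<not> hd v)"
    have hv: "v @ replicate a False @ replicate b True = [] \<or> \<not> hd (v @ replicate a False @ replicate b True)"
      using h a by (cases v; cases a; auto)
    have "y @ replicate a False @ replicate b True = u @ replicate a' False @ replicate b' True @ (v @ replicate a False @ replicate b True)"
      using h by simp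
    then show "b' < q * a'" using H[unfolded QD_alt[OF q]] h hv by blast
  qed
  ultimately show "q_decreasing q y \<and> b < q * a" by blast
next
  assume H: "q_decreasing q y \<and> b < q * a"
  show "q_decreasing q (y @ replicate a False @ replicate b True)"
    unfolding QD_alt[OF q]
  proof (intro allI impI)
    fix u a' b' v assume h: "y @ replicate a False @ replicate b True = u @ replicate a' False @ replicate b' True @ v \<and> 0 < a' \<and>
          (u = [] \<or> last u) \<and> (v = [] \<or> \<not> hd v)"
    show "b' < q * a'"
    proof (cases "b' = 0")
      case True then show ?thesis using h q by simp
    next
      case b0: False
      show ?thesis
      proof (cases "v = []")
        case True
        have e: "y @ replicate a False @ replicate b True = u @ replicate a' False @ replicate b' True"
          using h True by simp
        have "b = b'" using trail_ones[OF a, of y b] trail_ones[of a' u b'] h e by simp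
        then have "y @ replicate a False = u @ replicate a' False" using e by simp
        then have "a = a'" using trail_zeros[OF y, of a] trail_zeros[of u a'] h by simp
        then show ?thesis using H \<open>b = b'\<close> by simp
      next
        case vne: False
        have e: "(u @ replicate a' False @ replicate b' True) @ v = y @ (replicate a False @ replicate b True)"
          using h by simp
        then obtain us where us: "(u @ replicate a' False @ replicate b' True = y @ us \<and> us @ v = replicate a False @ replicate b True)
            \<or> (u @ replicate a' False @ replicate b' True @ us = y \<and> v = us @ replicate a False @ replicate b True)"
          unfolding append_eq_append_conv2 by auto
        then show ?thesis
        proof
          assume c1: "u @ replicate a' False @ replicate b' True = y @ us \<and> us @ v = replicate a False @ replicate b True"
          show ?thesis
          proof (cases "us = []")
            case True
            then have "y = u @ replicate a' False @ replicate b' True @ []" using c1 by simp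
            then show ?thesis using H[THEN conjunct1, unfolded QD_alt[OF q]] h by blast
          next
            case False
            have "last us = last (u @ replicate a' False @ replicate b' True)" using c1 False by (metis last_appendR)
            also have "\<dots> = True" using b0 by (cases b') auto
            finally have "last us" by simp
            then show ?thesis using not_sorted_split[of us v a b] c1 False vne h by blast
          qed
        next
          assume c2: "u @ replicate a' False @ replicate b' True @ us = y \<and> v = us @ replicate a False @ replicate b True"
          have "us = [] \<or> \<not> hd us" using c2 h vne by (cases us) auto
          then show ?thesis using H[THEN conjunct1, unfolded QD_alt[OF q]] h c2 by metis
        qed
      qed
    qed
  qed
qed



lemma tz_decomp: "\<exists>y1 c. y = y1 @ replicate c False \<and> (y1 = [] \<or> last y1)"
proof (induction y rule: rev_induct)
  case Nil then show ?case by simp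
next
  case (snoc x y)
  show ?case
  proof (cases x)
    case True
    have "y @ [x] = (y @ [x]) @ replicate 0 False \<and> (y @ [x] = [] \<or> last (y @ [x]))" using True by simp
    then show ?thesis by blast
  next
    case False
    from snoc obtain y1 c where "y = y1 @ replicate c False" "y1 = [] \<or> last y1" by blast
    then have "y @ [x] = y1 @ replicate (Suc c) False" using False by (simp add: replicate_append_same[symmetric])
    then show ?thesis using \<open>y1 = [] \<or> last y1\<close> by blast
  qed
qed

lemma QD_zeros:
  assumes q: "1 \<le> q" and y: "y1 = [] \<or> last y1"
  shows "q_decreasing q (y1 @ replicate c False) \<longleftrightarrow> q_decreasing q y1"
proof (cases c)
  case 0 then show ?thesis by simp
next
  case (Suc c')
  then show ?thesis using QD_block[OF q _ y, of c 0] q by simp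
qed

lemma QD_b:
  assumes q: "1 \<le> q" and k: "k < q"
  shows "q_decreasing q (y @ False # replicate k True) \<longleftrightarrow> q_decreasing q y"
proof -
  obtain y1 c where y: "y = y1 @ replicate c False" and y1: "y1 = [] \<or> last y1" using tz_decomp by blast
  have "y @ False # replicate k True = y1 @ replicate (Suc c) False @ replicate k True"
    using y by (simp add: replicate_append_same[symmetric])
  then have "q_decreasing q (y @ False # replicate k True) \<longleftrightarrow> q_decreasing q y1 \<and> k < q * Suc c"
    by (simp only: QD_block[OF q zero_less_Suc y1])
  moreover have "k < q * Suc c" using k by (simp add: less_le_trans)
  ultimately show ?thesis using QD_zeros[OF q y1] y by simp
qed

lemma QD_c:
  assumes q: "1 \<le> q"
  shows "q_decreasing q (y @ [False, False] @ replicate (k + q) True) \<longleftrightarrow> q_decreasing q (y @ False # replicate k True)"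
proof -
  obtain y1 c where y: "y = y1 @ replicate c False" and y1: "y1 = [] \<or> last y1" using tz_decomp by blast
  have "y @ False # replicate k True = y1 @ replicate (Suc c) False @ replicate k True"
    using y by (simp add: replicate_append_same[symmetric])
  then have 1: "q_decreasing q (y @ False # replicate k True) \<longleftrightarrow> q_decreasing q y1 \<and> k < q * Suc c"
    by (simp only: QD_block[OF q zero_less_Suc y1])
  have "y @ [False, False] @ replicate (k + q) True = y1 @ replicate (Suc (Suc c)) False @ replicate (k + q) True"
    using y by (simp add: replicate_append_same[symmetric])
  then have 2: "q_decreasing q (y @ [False, False] @ replicate (k + q) True) \<longleftrightarrow> q_decreasing q y1 \<and> k + q < q * Suc (Suc c)"
    by (simp only: QD_block[OF q zero_less_Suc y1])
  show ?thesis unfolding 1 2 by simp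
qed

lemma QD_d:
  assumes q: "1 \<le> q" and k: "q \<le> k" and H: "q_decreasing q (y @ False # replicate k True)"
  shows "\<exists>y'. y = y' @ [False]"
proof -
  obtain y1 c where y: "y = y1 @ replicate c False" and y1: "y1 = [] \<or> last y1" using tz_decomp by blast
  have "y @ False # replicate k True = y1 @ replicate (Suc c) False @ replicate k True"
    using y by (simp add: replicate_append_same[symmetric])
  then have "k < q * Suc c"
    using H by (simp only: QD_block[OF q zero_less_Suc y1])
  then have "c \<noteq> 0" using k by (cases c) auto
  then obtain c' where "c = Suc c'" using not0_implies_Suc by blast
  then have "y = (y1 @ replicate c' False) @ [False]" using y by (simp add: replicate_append_same[symmetric])
  then show ?thesis by blast
qed

lemma QD_psi:
  assumes q: "1 \<le> q" and H: "q_decreasing q u"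
  shows "q_decreasing q (psi q u)"
  using word_cases_rev[of u]
proof
  assume "\<exists>k. u = replicate k True"
  then obtain k where u: "u = replicate k True" by blast
  show ?thesis unfolding u psi_ones by (rule QD_ones)
next
  assume "\<exists>y k. u = y @ False # replicate k True"
  then obtain y k where u: "u = y @ False # replicate k True" by blast
  show ?thesis using H QD_c[OF q, of y k] by (simp add: u psi_step)
qed

lemma AV1: "\<not> sublist (R q) (replicate k True) \<longleftrightarrow> k \<le> q"
proof
  assume h: "\<not> sublist (R q) (replicate k True)"
  show "k \<le> q"
  proof (rule ccontr)
    assume "\<not> k \<le> q"
    then have k: "k = Suc q + (k - Suc q)" by simp
    have "replicate k True = R q @ replicate (k - Suc q) True"
      by (subst k) (simp only: replicate_add)
    then have "sublist (R q) (replicate k True)" by simp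
    then show False using h by blast
  qed
next
  assume "k \<le> q"
  show "\<not> sublist (R q) (replicate k True)"
  proof
    assume "sublist (R q) (replicate k True)"
    then have "length (R q) \<le> length (replicate k True)" by (rule sublist_length_le)
    then show False using \<open>k \<le> q\<close> by simp
  qed
qed

lemma AV2: "\<not> sublist (R q) (replicate k True @ False # v) \<longleftrightarrow> k \<le> q \<and> \<not> sublist (R q) v"
proof
  assume h: "\<not> sublist (R q) (replicate k True @ False # v)"
  have "\<not> sublist (R q) (replicate k True)"
  proof
    assume a: "sublist (R q) (replicate k True)"
    have "sublist (replicate k True) (replicate k True @ False # v)" by (rule sublist_append_rightI)
    with a have "sublist (R q) (replicate k True @ False # v)" by (rule sublist_order.order.trans)
    then show False using h by blast
  qed
  moreover have "\<not> sublist (R q) v"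
  proof
    assume "sublist (R q) v"
    moreover have "sublist v (replicate k True @ False # v)"
      using sublist_append_leftI[of v "replicate k True @ [False]"] by simp
    ultimately have "sublist (R q) (replicate k True @ False # v)" by (rule sublist_order.order.trans)
    then show False using h by blast
  qed
  ultimately show "k \<le> q \<and> \<not> sublist (R q) v" using AV1 by blast
next
  assume h: "k \<le> q \<and> \<not> sublist (R q) v"
  show "\<not> sublist (R q) (replicate k True @ False # v)"
  proof
    assume "sublist (R q) (replicate k True @ False # v)"
    then consider "sublist (R q) (replicate k True)" | "sublist (R q) (False # v)"
      | xs1 xs2 where "R q = xs1 @ xs2" "suffix xs1 (replicate k True)" "prefix xs2 (False # v)"
      unfolding sublist_append by blast
    then show False
    proof cases
      case 1 then show ?thesis using h AV1 by blast
    next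
      case 2
      then have "prefix (R q) (False # v) \<or> sublist (R q) v" by (simp only: sublist_Cons_right)
      moreover have "\<not> prefix (R q) (False # v)" by simp
      ultimately show ?thesis using h by blast
    next
      case 3
      have "length xs1 \<le> length (replicate k True)" using 3(2) by (rule suffix_length_le)
      then have "length xs1 \<le> k" by simp
      have "xs2 \<noteq> []"
      proof
        assume "xs2 = []"
        then have "length (R q) = length xs1" using 3(1) by simp
        then show False using \<open>length xs1 \<le> k\<close> h by simp
      qed
      then obtain z zs where z: "xs2 = z # zs" by (cases xs2) auto
      then have "z \<in> set (R q)" using 3(1) by simp
      then have "z" by auto
      then show ?thesis using 3(3) z by simp
    qed
  qed
qed


lemma phi_QD:
  assumes q: "1 \<le> q"
  shows "\<not> sublist (R q) w \<Longrightarrow> q_decreasing q (phi q w)"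
proof (induction "length w" arbitrary: w rule: less_induct)
  case less
  from word_cases[of w] show ?case
  proof
    assume "\<exists>k. w = replicate k True"
    then obtain k where w: "w = replicate k True" by blast
    show ?thesis unfolding w phi_ones by (rule QD_ones)
  next
    assume "\<exists>k v. w = replicate k True @ False # v"
    then obtain k v where w: "w = replicate k True @ False # v" by blast
    have kv: "k \<le> q" "\<not> sublist (R q) v" using less.prems w AV2 by auto
    have IH: "q_decreasing q (phi q v)" using less.hyps[of v] kv w by simp
    show ?thesis
    proof (cases "k = q")
      case True then show ?thesis using w IH QD_psi[OF q] by (simp add: phi_step)
    next
      case False then have "k < q" using kv by simp
      then show ?thesis using w IH QD_b[OF q] False by (simp add: phi_step)
    qed
  qed
qed

lemma phi_inj:
  assumes q: "1 \<le> q"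
  shows "\<not> sublist (R q) w1 \<Longrightarrow> \<not> sublist (R q) w2 \<Longrightarrow> length w1 = length w2 \<Longrightarrow> phi q w1 = phi q w2 \<Longrightarrow> w1 = w2"
proof (induction "length w1" arbitrary: w1 w2 rule: less_induct)
  case less
  consider (a) m1 m2 where "w1 = replicate m1 True" "w2 = replicate m2 True"
    | (b) m1 k2 v2 where "w1 = replicate m1 True" "w2 = replicate k2 True @ False # v2"
    | (c) m2 k1 v1 where "w2 = replicate m2 True" "w1 = replicate k1 True @ False # v1"
    | (d) k1 v1 k2 v2 where "w1 = replicate k1 True @ False # v1" "w2 = replicate k2 True @ False # v2"
    using word_cases[of w1] word_cases[of w2] by blast
  then show ?case
  proof cases
    case a then show ?thesis using less.prems by simp
  next
    case b
    have "m1 \<le> q" using less.prems(1) b AV1 by simp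
    have "k2 \<le> q" using less.prems(2) b AV2 by simp
    show ?thesis
    proof (cases "k2 = q")
      case True then show ?thesis using b less.prems \<open>m1 \<le> q\<close> by simp
    next
      case False
      have "replicate m1 True = phi q v2 @ False # replicate k2 True"
        using less.prems(4) False unfolding b phi_ones phi_step by simp
      then show ?thesis by simp
    qed
  next
    case c
    have "m2 \<le> q" using less.prems(2) c AV1 by simp
    have "k1 \<le> q" using less.prems(1) c AV2 by simp
    show ?thesis
    proof (cases "k1 = q")
      case True then show ?thesis using c less.prems \<open>m2 \<le> q\<close> by simp
    next
      case False
      have "replicate m2 True = phi q v1 @ False # replicate k1 True"
        using less.prems(4) False unfolding c phi_ones phi_step by simp
      then show ?thesis by simp
    qed
  next
    case d
    then have k: "k1 \<le> q" "k2 \<le> q" and v: "\<not> sublist (R q) v1" "\<not> sublist (R q) v2"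
      using less.prems AV2 by auto
    have lt: "length v1 < length w1" using d by simp
    have mixed: False if "k1 < q" "k2 = q" "phi q v1 @ False # replicate k1 True = psi q (phi q v2)" for k1 k2 v1 v2
    proof -
      from word_cases_rev[of "phi q v2"] show False
      proof
        assume "\<exists>m. phi q v2 = replicate m True"
        then obtain m where "phi q v2 = replicate m True" by blast
        then show False using that(3) by (simp add: psi_ones)
      next
        assume "\<exists>y j. phi q v2 = y @ False # replicate j True"
        then obtain y j where "phi q v2 = y @ False # replicate j True" by blast
        then have "phi q v1 @ False # replicate k1 True = (y @ [False]) @ False # replicate (j + q) True"
          using that(3) by (simp add: psi_step)
        from snoc_eq[OF this] show False using that(1) by simp
      qed
    qed
    show ?thesis
    proof (cases "k1 = q")
      case k1: True
      show ?thesis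
      proof (cases "k2 = q")
        case True
        then have "psi q (phi q v1) = psi q (phi q v2)" using k1 d less.prems by (simp add: phi_step)
        then have "phi q v1 = phi q v2" by (rule psi_inj)
        moreover have "length v1 = length v2" using d less.prems k1 True by simp
        ultimately show ?thesis using less.hyps[OF lt v(1) v(2)] d k1 True by simp
      next
        case False
        then have "phi q v2 @ False # replicate k2 True = psi q (phi q v1)" using k1 d less.prems by (simp add: phi_step)
        then show ?thesis using mixed[of k2 q v2 v1] False k by simp
      qed
    next
      case k1: False
      show ?thesis
      proof (cases "k2 = q")
        case True
        then have "phi q v1 @ False # replicate k1 True = psi q (phi q v2)" using k1 d less.prems by (simp add: phi_step)
        then show ?thesis using mixed[of k1 q v1 v2] True k k1 by simp
      next
        case False
        then have "phi q v1 @ False # replicate k1 True = phi q v2 @ False # replicate k2 True"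
          using k1 d less.prems by (simp add: phi_step)
        from snoc_eq[OF this] have "phi q v1 = phi q v2" "k1 = k2" by auto
        moreover have "length v1 = length v2" using d less.prems \<open>k1 = k2\<close> by simp
        ultimately show ?thesis using less.hyps[OF lt v(1) v(2)] d by simp
      qed
    qed
  qed
qed

lemma phi_surj:
  assumes q: "1 \<le> q"
  shows "q_decreasing q x \<Longrightarrow> \<exists>w. \<not> sublist (R q) w \<and> length w = length x \<and> phi q w = x"
proof (induction "length x" arbitrary: x rule: less_induct)
  case less
  from word_cases_rev[of x] show ?case
  proof
    assume "\<exists>m. x = replicate m True"
    then obtain m where x: "x = replicate m True" by blast
    show ?thesis
    proof (cases "m \<le> q")
      case True then show ?thesis using x AV1 phi_ones by blast
    next
      case False
      define d where "d = m - q - 1"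
      have m: "m = d + q + 1" using False unfolding d_def by simp
      obtain w' where w': "\<not> sublist (R q) w'" "length w' = d" "phi q w' = replicate d True"
        using less.hyps[of "replicate d True"] QD_ones x m by auto
      let ?w = "replicate q True @ False # w'"
      have "\<not> sublist (R q) ?w" using AV2 w' by simp
      moreover have "length ?w = length x" using x m w' by simp
      moreover have "phi q ?w = x" using x m w' by (simp add: phi_step psi_ones)
      ultimately show ?thesis by blast
    qed
  next
    assume "\<exists>y k. x = y @ False # replicate k True"
    then obtain y k where x: "x = y @ False # replicate k True" by blast
    show ?thesis
    proof (cases "k < q")
      case True
      then have "q_decreasing q y" using QD_b[OF q True] less.prems x by simp
      then obtain v where v: "\<not> sublist (R q) v" "length v = length y" "phi q v = y"
        using less.hyps[of y] x by auto
      let ?w = "replicate k True @ False # v"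
      have "\<not> sublist (R q) ?w" using AV2 v True by simp
      moreover have "length ?w = length x" using x v by simp
      moreover have "phi q ?w = x" using x v True by (simp add: phi_step)
      ultimately show ?thesis by blast
    next
      case False
      have qk: "q \<le> k" using False by simp
      have Hx: "q_decreasing q (y @ False # replicate k True)" using less.prems x by simp
      obtain y' where y': "y = y' @ [False]" using QD_d[OF q qk Hx] by blast
      define j where "j = k - q"
      have j: "k = j + q" using qk unfolding j_def by simp
      have "q_decreasing q (y' @ [False, False] @ replicate (j + q) True)" using less.prems x y' j by simp
      then have "q_decreasing q (y' @ False # replicate j True)" using QD_c[OF q] by simp
      then obtain v where v: "\<not> sublist (R q) v" "length v = length (y' @ False # replicate j True)"
           "phi q v = y' @ False # replicate j True"
        using less.hyps[of "y' @ False # replicate j True"] x y' j by auto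
      let ?w = "replicate q True @ False # v"
      have "\<not> sublist (R q) ?w" using AV2 v by simp
      moreover have "length ?w = length x" using x v y' j by simp
      moreover have "phi q ?w = x" using x v y' j by (simp add: phi_step psi_step)
      ultimately show ?thesis by blast
    qed
  qed
qed

theorem theorem1:
  fixes q n :: nat
  assumes "1 \<le> q"
  shows "bij_betw (phi q) (avoid_words q n) (W_words q n)"
  unfolding bij_betw_def
proof
  show "inj_on (phi q) (avoid_words q n)"
    unfolding inj_on_def avoid_words_def binwords_def using phi_inj[OF assms] by auto
  show "phi q ` avoid_words q n = W_words q n"
  proof
    show "phi q ` avoid_words q n \<subseteq> W_words q n"
      unfolding avoid_words_def W_words_def binwords_def using phi_QD[OF assms] length_phi by auto
    show "W_words q n \<subseteq> phi q ` avoid_words q n"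
    proof
      fix x assume "x \<in> W_words q n"
      then have "q_decreasing q x" "length x = n" unfolding W_words_def binwords_def by auto
      then obtain w where "\<not> sublist (R q) w" "length w = n" "phi q w = x" using phi_surj[OF assms, of x] by blast
      then show "x \<in> phi q ` avoid_words q n" unfolding avoid_words_def binwords_def by auto
    qed
  qed
qed

end
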